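(* Let $n>3$ and $k,m\geq2$ with $k+m=n+1$. Write $\mathbb{R}^{n+1}\equiv\mathbb{C}\times\mathbb{R}^{k-2}\times\mathbb{C}\times\mathbb{R}^{m-2}$ with points $(z_1,x_1,z_2,x_2)$, and let $O(k)\times O(m)$ act on $\mathbb{R}^{n+1}$ with $O(k)$ acting on the first factor $\mathbb{C}\times\mathbb{R}^{k-2}\equiv\mathbb{R}^k$ and $O(m)$ on the second factor $\mathbb{C}\times\mathbb{R}^{m-2}\equiv\mathbb{R}^m$. If $u:\mathbb{S}^n\to\mathbb{R}$ is $[O(k)\times O(m)]$-invariant and $$u(z_1,x_1,z_2,x_2)=-u(-\bar z_2,x_1,\bar z_1,x_2)\qquad\text{for all }(z_1,x_1,z_2,x_2),$$ then $u\equiv0$.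
   Context: $\mathbb{S}^n$ is the unit sphere in $\mathbb{R}^{n+1}$; $u$ being $[O(k)\times O(m)]$-invariant means $u(\gamma y)=u(y)$ for all $\gamma\in O(k)\times O(m)$ and $y\in\mathbb{S}^n$. *)

theory Defs
  imports Main "HOL-Analysis.Analysis"
begin

text \<open>Points of R^(n+1) are represented as functions y :: nat => real with
  y i = 0 for i > n; coordinates 0..n.  With k + m = n + 1, coordinates 0..k-1
  form the first factor R^k = C x R^(k-2) (z1 = y0 + i y1, x1 = (y2..y(k-1))), and
  coordinates k..n form the second factor R^m = C x R^(m-2)
  (z2 = yk + i y(k+1), x2 = (y(k+2)..yn)).\<close>

definition sphere_n :: "nat \<Rightarrow> (nat \<Rightarrow> real) set" where
  "sphere_n n = {y. (\<forall>i>n. y i = 0) \<and> (\<Sum>i\<le>n. (y i)\<^sup>2) = 1}"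

definition orth_mat :: "nat \<Rightarrow> (nat \<Rightarrow> nat \<Rightarrow> real) \<Rightarrow> bool" where
  "orth_mat d A \<longleftrightarrow>
     (\<forall>i<d. \<forall>j<d. (\<Sum>l<d. A l i * A l j) = (if i = j then 1 else 0))"

definition act_OkOm ::
  "nat \<Rightarrow> nat \<Rightarrow> (nat \<Rightarrow> nat \<Rightarrow> real) \<Rightarrow> (nat \<Rightarrow> nat \<Rightarrow> real) \<Rightarrow> (nat \<Rightarrow> real) \<Rightarrow> (nat \<Rightarrow> real)" where
  "act_OkOm k m A B y = (\<lambda>i. if i < k then (\<Sum>j<k. A i j * y j)
                              else if i < k + m then (\<Sum>j<m. B (i - k) j * y (k + j))
                              else 0)"

definition invariant_OkOm :: "nat \<Rightarrow> nat \<Rightarrow> ((nat \<Rightarrow> real) \<Rightarrow> real) \<Rightarrow> bool" where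
  "invariant_OkOm k m u \<longleftrightarrow>
     (\<forall>A B. orth_mat k A \<longrightarrow> orth_mat m B \<longrightarrow>
        (\<forall>y\<in>sphere_n (k + m - 1). u (act_OkOm k m A B y) = u y))"

text \<open>The map (z1,x1,z2,x2) |-> (-conj z2, x1, conj z1, x2).
  -conj z2 = -y_k + i y_(k+1);  conj z1 = y_0 - i y_1.\<close>
definition swap_map :: "nat \<Rightarrow> (nat \<Rightarrow> real) \<Rightarrow> (nat \<Rightarrow> real)" where
  "swap_map k y = (\<lambda>i. if i = 0 then - y k
                       else if i = 1 then y (k + 1)
                       else if i = k then y 0
                       else if i = k + 1 then - y 1
                       else y i)"

end

theory Submission
  imports Defs
begin
lemma delta_prod: "(if l = i then 1 else 0) * (if l = j then 1 else (0::real)) = (if l = i then (if i = j then 1 else 0) else 0)"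
  by auto

lemma delta_mult2: "(x::real) * (if i = j then 1 else 0) = (if i = j then x else 0)"
  by auto

lemma delta_mult: "(if i = j then 1 else 0) * (x::real) = (if i = j then x else 0)"
  by auto

lemma householder:
  fixes v w :: "nat \<Rightarrow> real"
  assumes eq: "(\<Sum>j<d. (v j)\<^sup>2) = (\<Sum>j<d. (w j)\<^sup>2)"
  shows "\<exists>A. orth_mat d A \<and> (\<forall>i<d. (\<Sum>j<d. A i j * v j) = w i)"
proof (cases "\<forall>j<d. v j = w j")
  case True
  let ?A = "\<lambda>i j. if i = j then 1 else (0::real)"
  have "orth_mat d ?A" unfolding orth_mat_def by (simp add: delta_prod)
  moreover have "\<forall>i<d. (\<Sum>j<d. ?A i j * v j) = w i" using True by (simp add: delta_mult)
  ultimately show ?thesis by blast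
next
  case False
  define e where "e j = v j - w j" for j
  define N where "N = (\<Sum>j<d. (e j)\<^sup>2)"
  define c where "c = 2 / N"
  obtain j0 where j0: "j0 < d" "e j0 \<noteq> 0" using False e_def by auto
  have "N > 0" unfolding N_def
    by (rule sum_pos2[of _ j0]) (use j0 in auto)
  have ev: "(\<Sum>j<d. e j * v j) = N / 2"
  proof -
    have "N = (\<Sum>j<d. (v j)\<^sup>2) - 2 * (\<Sum>j<d. v j * w j) + (\<Sum>j<d. (w j)\<^sup>2)"
      unfolding N_def e_def by (simp add: power2_diff sum.distrib sum_subtractf sum_distrib_left mult.assoc)
    moreover have "(\<Sum>j<d. e j * v j) = (\<Sum>j<d. (v j)\<^sup>2) - (\<Sum>j<d. v j * w j)"
      unfolding e_def by (simp add: algebra_simps power2_eq_square sum_subtractf)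
    ultimately show ?thesis using eq by simp
  qed
  define A where "A i j = (if i = j then 1 else 0) - c * e i * e j" for i j
  have act: "\<forall>i<d. (\<Sum>j<d. A i j * v j) = w i"
  proof (intro allI impI)
    fix i assume i: "i < d"
    have "(\<Sum>j<d. A i j * v j) = (\<Sum>j<d. (if i = j then v j else 0)) - c * e i * (\<Sum>j<d. e j * v j)"
      unfolding A_def by (simp add: algebra_simps sum_subtractf sum_distrib_left delta_mult2)
    also have "\<dots> = v i - e i" using i ev \<open>N > 0\<close> by (simp add: c_def field_simps)
    finally show "(\<Sum>j<d. A i j * v j) = w i" by (simp add: e_def)
  qed
  have "orth_mat d A" unfolding orth_mat_def
  proof (intro allI impI)
    fix i j assume i: "i < d" and j: "j < d"
    have pw: "A l i * A l j = (if l = i then 1 else 0) * (if l = j then 1 else 0)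
        - c * e i * (if l = j then e l else 0) - c * e j * (if l = i then e l else 0)
        + c * c * e i * e j * (e l)\<^sup>2" for l
      unfolding A_def by (auto simp: algebra_simps power2_eq_square)
    have s1: "(\<Sum>l<d. (if l = i then 1 else 0) * (if l = j then 1 else (0::real))) = (if i = j then 1 else 0)"
      using i by (simp add: delta_prod)
    have s2: "(\<Sum>l<d. c * e i * (if l = j then e l else 0)) = c * e i * e j"
      using j by (simp add: sum_distrib_left[symmetric])
    have s3: "(\<Sum>l<d. c * e j * (if l = i then e l else 0)) = c * e j * e i"
      using i by (simp add: sum_distrib_left[symmetric])
    have s4: "(\<Sum>l<d. c * c * e i * e j * (e l)\<^sup>2) = c * c * e i * e j * N"
      unfolding N_def by (simp add: sum_distrib_left[symmetric])
    have "(\<Sum>l<d. A l i * A l j) = (if i = j then 1 else 0) - c * e i * e j - c * e j * e i + c * c * e i * e j * N"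
      unfolding pw sum.distrib sum_subtractf s1 s2 s3 s4 by simp
    also have "\<dots> = (if i = j then 1 else 0) + e i * e j * (c * c * N - 2 * c)"
      by (simp add: algebra_simps)
    also have "c * c * N - 2 * c = 0" using \<open>N > 0\<close> by (simp add: c_def field_simps)
    finally show "(\<Sum>l<d. A l i * A l j) = (if i = j then 1 else 0)" by simp
  qed
  with act show ?thesis by blast
qed

definition SS :: "nat \<Rightarrow> (nat \<Rightarrow> real) \<Rightarrow> real" where
  "SS k y = (\<Sum>i<k. (y i)\<^sup>2)"
definition TT :: "nat \<Rightarrow> nat \<Rightarrow> (nat \<Rightarrow> real) \<Rightarrow> real" where
  "TT k m y = (\<Sum>j<m. (y (k + j))\<^sup>2)"

lemma split_sum: "(\<Sum>i<k+m. f i) = (\<Sum>i<k. f i) + (\<Sum>j<m. f (k+j))" for f :: "nat \<Rightarrow> real"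
  by (induct m) (auto simp: add.assoc)

lemma sphere_iff:
  assumes "k + m = n + 1"
  shows "y \<in> sphere_n n \<longleftrightarrow> (\<forall>i>n. y i = 0) \<and> SS k y + TT k m y = 1"
proof -
  have "{..n} = {..<k+m}" using assms by auto
  then have "(\<Sum>i\<le>n. (y i)\<^sup>2) = SS k y + TT k m y"
    unfolding SS_def TT_def by (simp add: split_sum)
  then show ?thesis unfolding sphere_n_def by auto
qed

lemma orbit:
  assumes km: "k + m = n + 1" and inv: "invariant_OkOm k m u"
    and y: "y \<in> sphere_n n" and y': "y' \<in> sphere_n n" and S: "SS k y = SS k y'"
  shows "u y = u y'"
proof -
  have T: "TT k m y = TT k m y'" using y y' S sphere_iff[OF km] by auto
  obtain A where A: "orth_mat k A" "\<forall>i<k. (\<Sum>j<k. A i j * y j) = y' i"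
    using householder[where d=k and v=y and w=y'] S unfolding SS_def by auto
  obtain B where B: "orth_mat m B" "\<forall>i<m. (\<Sum>j<m. B i j * y (k + j)) = y' (k + i)"
    using householder[where d=m and v="\<lambda>j. y (k + j)" and w="\<lambda>j. y' (k + j)"] T unfolding TT_def by auto
  have "act_OkOm k m A B y = y'"
  proof
    fix i
    show "act_OkOm k m A B y i = y' i"
    proof (cases "i < k")
      case True then show ?thesis using A by (simp add: act_OkOm_def)
    next
      case False
      show ?thesis
      proof (cases "i < k + m")
        case True
        then have "i - k < m" using False by simp
        then show ?thesis using B False True by (simp add: act_OkOm_def)
      next
        case False2: False
        then have "i > n" using km by simp
        then show ?thesis using y' False False2 unfolding sphere_n_def by (simp add: act_OkOm_def)
      qed
    qed
  qed
  moreover have "y \<in> sphere_n (k + m - 1)" using y km by simp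
  ultimately show ?thesis using inv A(1) B(1) unfolding invariant_OkOm_def by metis
qed

definition pt :: "nat \<Rightarrow> real \<Rightarrow> real \<Rightarrow> real \<Rightarrow> real \<Rightarrow> nat \<Rightarrow> real" where
  "pt k a b c d = (\<lambda>i. if i = 0 then a else if i = k then c else if i = 2 then b
                         else if i = k + 2 then d else 0)"

lemma SS_pt:
  assumes "k \<ge> 2"
  shows "SS k (pt k a b c d) = a\<^sup>2 + (if 2 < k then b\<^sup>2 else 0)"
proof -
  have "\<And>i. i \<in> {..<k} \<Longrightarrow> (pt k a b c d i)\<^sup>2 = (if i = 0 then a\<^sup>2 else 0) + (if i = 2 then b\<^sup>2 else 0)"
    unfolding pt_def by auto
  then have "SS k (pt k a b c d) = (\<Sum>i<k. (if i = 0 then a\<^sup>2 else 0) + (if i = 2 then b\<^sup>2 else 0))"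
    unfolding SS_def by (rule sum.cong[OF refl])
  also have "\<dots> = a\<^sup>2 + (if 2 < k then b\<^sup>2 else 0)"
    using assms by (simp add: sum.distrib)
  finally show ?thesis .
qed

lemma TT_pt:
  assumes "k \<ge> 2"
  shows "TT k m (pt k a b c d) = (if 0 < m then c\<^sup>2 else 0) + (if 2 < m then d\<^sup>2 else 0)"
proof -
  have "\<And>j. j \<in> {..<m} \<Longrightarrow> (pt k a b c d (k + j))\<^sup>2 = (if j = 0 then c\<^sup>2 else 0) + (if j = 2 then d\<^sup>2 else 0)"
    using assms unfolding pt_def by auto
  then have "TT k m (pt k a b c d) = (\<Sum>j<m. (if j = 0 then c\<^sup>2 else 0) + (if j = 2 then d\<^sup>2 else 0))"
    unfolding TT_def by (rule sum.cong[OF refl])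
  also have "\<dots> = (if 0 < m then c\<^sup>2 else 0) + (if 2 < m then d\<^sup>2 else 0)"
    by (simp add: sum.distrib)
  finally show ?thesis .
qed

lemma pt_zero:
  assumes "k + m = n + 1" "k \<ge> 2" "m \<ge> 2" "2 < m \<or> d = 0"
  shows "\<forall>i>n. pt k a b c d i = 0"
  using assms unfolding pt_def by auto

lemma swap_pt:
  assumes "k \<ge> 2"
  shows "swap_map k (pt k a b c d) = pt k (-c) b a d"
  using assms unfolding swap_map_def pt_def by (auto simp: fun_eq_iff)

theorem proposition4p2:
  fixes n k m :: nat and u :: "(nat \<Rightarrow> real) \<Rightarrow> real"
  assumes "n > 3" and "k \<ge> 2" and "m \<ge> 2" and "k + m = n + 1"
    and "invariant_OkOm k m u"
    and "\<forall>y\<in>sphere_n n. u y = - u (swap_map k y)"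
  shows "\<forall>y\<in>sphere_n n. u y = 0"
proof -
  note km = assms(4) and inv = assms(5) and sw = assms(6)
  note sph = sphere_iff[OF km]
  have Zpt: "u (pt k a b a d) = 0" if p: "pt k a b a d \<in> sphere_n n" for a b d
  proof -
    have e: "swap_map k (pt k a b a d) = pt k (-a) b a d" using swap_pt assms(2) by simp
    have zz: "\<forall>i>n. pt k (-a) b a d i = 0" using p unfolding sphere_n_def pt_def by auto
    have "SS k (pt k (-a) b a d) = SS k (pt k a b a d)" using SS_pt assms(2) by simp
    moreover have "TT k m (pt k (-a) b a d) = TT k m (pt k a b a d)" using TT_pt assms(2) by simp
    ultimately have s: "pt k (-a) b a d \<in> sphere_n n" using p zz sph by auto
    have "u (pt k a b a d) = u (pt k (-a) b a d)"
      using orbit[OF km inv p s] \<open>SS k (pt k (-a) b a d) = _\<close> by simp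
    moreover have "u (pt k a b a d) = - u (pt k (-a) b a d)" using sw p e by metis
    ultimately show ?thesis by simp
  qed
  have SSnn: "SS k y \<ge> 0" for y unfolding SS_def by (simp add: sum_nonneg)
  have TTnn: "TT k m y \<ge> 0" for y unfolding TT_def by (simp add: sum_nonneg)
  have Z: "u y = 0" if y: "y \<in> sphere_n n"
     and c: "(2 < m \<and> SS k y \<le> TT k m y) \<or> (2 < k \<and> TT k m y \<le> SS k y)" for y
  proof -
    have sum1: "SS k y + TT k m y = 1" using y sph by auto
    from c show ?thesis
    proof
      assume h: "2 < m \<and> SS k y \<le> TT k m y"
      define cc where "cc = sqrt (SS k y)"
      define r where "r = sqrt (TT k m y - SS k y)"
      let ?q = "pt k cc 0 cc r"
      have "SS k ?q = SS k y" using SS_pt assms(2) SSnn by (simp add: cc_def)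
      moreover have "TT k m ?q = TT k m y" using TT_pt assms(2) SSnn h by (simp add: cc_def r_def)
      moreover have "\<forall>i>n. ?q i = 0" using pt_zero[OF km assms(2) assms(3)] h by blast
      ultimately have q: "?q \<in> sphere_n n" using sph sum1 by auto
      have "u y = u ?q" using orbit[OF km inv y q] \<open>SS k ?q = SS k y\<close> by simp
      then show ?thesis using Zpt q by simp
    next
      assume h: "2 < k \<and> TT k m y \<le> SS k y"
      define cc where "cc = sqrt (TT k m y)"
      define r where "r = sqrt (SS k y - TT k m y)"
      let ?q = "pt k cc r cc 0"
      have "SS k ?q = SS k y" using SS_pt assms(2) TTnn h by (simp add: cc_def r_def)
      moreover have "TT k m ?q = TT k m y" using TT_pt assms(2) assms(3) TTnn by (simp add: cc_def)
      moreover have "\<forall>i>n. ?q i = 0" using pt_zero[OF km assms(2) assms(3)] by blast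
      ultimately have q: "?q \<in> sphere_n n" using sph sum1 by auto
      have "u y = u ?q" using orbit[OF km inv y q] \<open>SS k ?q = SS k y\<close> by simp
      then show ?thesis using Zpt q by simp
    qed
  qed
  show ?thesis
  proof
    fix y assume y: "y \<in> sphere_n n"
    have sum1: "SS k y + TT k m y = 1" using y sph by auto
    show "u y = 0"
    proof (cases "(2 < m \<and> SS k y \<le> TT k m y) \<or> (2 < k \<and> TT k m y \<le> SS k y)")
      case True then show ?thesis using Z y by blast
    next
      case False
      define a where "a = sqrt (SS k y)"
      define b where "b = sqrt (TT k m y)"
      let ?p = "pt k a 0 b 0"
      let ?p' = "pt k (-b) 0 a 0"
      have "SS k ?p = SS k y" using SS_pt assms(2) SSnn by (simp add: a_def)
      moreover have "TT k m ?p = TT k m y" using TT_pt assms(2) assms(3) TTnn by (simp add: b_def)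
      moreover have "\<forall>i>n. ?p i = 0" using pt_zero[OF km assms(2) assms(3)] by blast
      ultimately have p: "?p \<in> sphere_n n" using sph sum1 by auto
      have S': "SS k ?p' = TT k m y" using SS_pt assms(2) TTnn by (simp add: b_def)
      moreover have T': "TT k m ?p' = SS k y" using TT_pt assms(2) assms(3) SSnn by (simp add: a_def)
      moreover have "\<forall>i>n. ?p' i = 0" using pt_zero[OF km assms(2) assms(3)] by blast
      ultimately have p': "?p' \<in> sphere_n n" using sph sum1 by auto
      have "u y = u ?p" using orbit[OF km inv y p] \<open>SS k ?p = SS k y\<close> by simp
      also have "\<dots> = - u ?p'" using sw p swap_pt[OF assms(2)] by metis
      also have "u ?p' = 0"
      proof (rule Z[OF p'])
        show "(2 < m \<and> SS k ?p' \<le> TT k m ?p') \<or> (2 < k \<and> TT k m ?p' \<le> SS k ?p')"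
          unfolding S' T' using False assms(1-4) by auto
      qed
      finally show ?thesis by simp
    qed
  qed
qed

end
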